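(* Let $\mathcal{C}$ be a rigid monoidal category. An object $f:A\to B$ of $\mathrm{Arr}(\mathcal{C})$ (with its pointwise monoidal structure) has a dual if and only if $f$ is an isomorphism in $\mathcal{C}$.
   Context: $\mathrm{Arr}(\mathcal{C})$ is the arrow category: objects are morphisms $h:A\to B$ of $\mathcal{C}$, morphisms $(A,B,h)\to(A',B',h')$ are pairs $(\phi_A,\phi_B)$ with $h'\circ\phi_A=\phi_B\circ h$, composition componentwise. Pointwise monoidal structure: $(f:A_1\to B_1)\otimes(g:A_2\to B_2)=f\otimes g:A_1\otimes A_2\to B_1\otimes B_2$, morphisms tensored componentwise, unit object $\mathrm{id}_{\mathbb{I}}$, associator and unitors componentwise from $\mathcal{C}$. Rigid means every object has (left and right) duals, with evaluation and coevaluation maps satisfying the snake identities. *)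

theory Defs
  imports Main
begin

text \<open>A (monoidal) category with object carrier cOb and morphism carrier cAr.
  cComp g f denotes the composite g after f (defined for Cod f = Dom g).\<close>

record ('o, 'm) mcat =
  cOb :: "'o set"
  cAr :: "'m set"
  cDom :: "'m \<Rightarrow> 'o"
  cCod :: "'m \<Rightarrow> 'o"
  cComp :: "'m \<Rightarrow> 'm \<Rightarrow> 'm"
  cId :: "'o \<Rightarrow> 'm"
  cTens :: "'o \<Rightarrow> 'o \<Rightarrow> 'o"
  cTensM :: "'m \<Rightarrow> 'm \<Rightarrow> 'm"
  cUnit :: "'o"
  cAssoc :: "'o \<Rightarrow> 'o \<Rightarrow> 'o \<Rightarrow> 'm"
  cLU :: "'o \<Rightarrow> 'm"
  cRU :: "'o \<Rightarrow> 'm"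

definition hom :: "('o,'m) mcat \<Rightarrow> 'o \<Rightarrow> 'o \<Rightarrow> 'm set" where
  "hom C a b = {f \<in> cAr C. cDom C f = a \<and> cCod C f = b}"

definition is_category :: "('o,'m) mcat \<Rightarrow> bool" where
  "is_category C \<longleftrightarrow>
     (\<forall>f\<in>cAr C. cDom C f \<in> cOb C \<and> cCod C f \<in> cOb C) \<and>
     (\<forall>a\<in>cOb C. cId C a \<in> hom C a a) \<and>
     (\<forall>f\<in>cAr C. \<forall>g\<in>cAr C. cCod C f = cDom C g \<longrightarrow>
         cComp C g f \<in> hom C (cDom C f) (cCod C g)) \<and>
     (\<forall>f\<in>cAr C. cComp C (cId C (cCod C f)) f = f \<and> cComp C f (cId C (cDom C f)) = f) \<and>
     (\<forall>f\<in>cAr C. \<forall>g\<in>cAr C. \<forall>h\<in>cAr C. cCod C f = cDom C g \<longrightarrow> cCod C g = cDom C h \<longrightarrow>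
         cComp C h (cComp C g f) = cComp C (cComp C h g) f)"

definition iso :: "('o,'m) mcat \<Rightarrow> 'm \<Rightarrow> bool" where
  "iso C f \<longleftrightarrow> f \<in> cAr C \<and>
     (\<exists>g\<in>hom C (cCod C f) (cDom C f).
        cComp C g f = cId C (cDom C f) \<and> cComp C f g = cId C (cCod C f))"

definition inv :: "('o,'m) mcat \<Rightarrow> 'm \<Rightarrow> 'm" where
  "inv C f = (THE g. g \<in> hom C (cCod C f) (cDom C f) \<and>
        cComp C g f = cId C (cDom C f) \<and> cComp C f g = cId C (cCod C f))"

definition is_monoidal :: "('o,'m) mcat \<Rightarrow> bool" where
  "is_monoidal C \<longleftrightarrow> is_category C \<and> cUnit C \<in> cOb C \<and>
     (\<forall>a\<in>cOb C. \<forall>b\<in>cOb C. cTens C a b \<in> cOb C) \<and>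
     (\<forall>f\<in>cAr C. \<forall>g\<in>cAr C. cTensM C f g \<in>
         hom C (cTens C (cDom C f) (cDom C g)) (cTens C (cCod C f) (cCod C g))) \<and>
     (\<forall>a\<in>cOb C. \<forall>b\<in>cOb C. cTensM C (cId C a) (cId C b) = cId C (cTens C a b)) \<and>
     (\<forall>f\<in>cAr C. \<forall>g\<in>cAr C. \<forall>f'\<in>cAr C. \<forall>g'\<in>cAr C.
         cCod C f = cDom C g \<longrightarrow> cCod C f' = cDom C g' \<longrightarrow>
         cTensM C (cComp C g f) (cComp C g' f') = cComp C (cTensM C g g') (cTensM C f f')) \<and>
     (\<forall>a\<in>cOb C. \<forall>b\<in>cOb C. \<forall>c\<in>cOb C.
         cAssoc C a b c \<in> hom C (cTens C (cTens C a b) c) (cTens C a (cTens C b c)) \<and>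
         iso C (cAssoc C a b c)) \<and>
     (\<forall>f\<in>cAr C. \<forall>g\<in>cAr C. \<forall>h\<in>cAr C.
         cComp C (cAssoc C (cCod C f) (cCod C g) (cCod C h)) (cTensM C (cTensM C f g) h) =
         cComp C (cTensM C f (cTensM C g h)) (cAssoc C (cDom C f) (cDom C g) (cDom C h))) \<and>
     (\<forall>a\<in>cOb C. cLU C a \<in> hom C (cTens C (cUnit C) a) a \<and> iso C (cLU C a)) \<and>
     (\<forall>f\<in>cAr C. cComp C (cLU C (cCod C f)) (cTensM C (cId C (cUnit C)) f) =
                 cComp C f (cLU C (cDom C f))) \<and>
     (\<forall>a\<in>cOb C. cRU C a \<in> hom C (cTens C a (cUnit C)) a \<and> iso C (cRU C a)) \<and>
     (\<forall>f\<in>cAr C. cComp C (cRU C (cCod C f)) (cTensM C f (cId C (cUnit C))) =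
                 cComp C f (cRU C (cDom C f))) \<and>
     (\<forall>a\<in>cOb C. \<forall>b\<in>cOb C. \<forall>c\<in>cOb C. \<forall>d\<in>cOb C.
         cComp C (cAssoc C a b (cTens C c d)) (cAssoc C (cTens C a b) c d) =
         cComp C (cTensM C (cId C a) (cAssoc C b c d))
           (cComp C (cAssoc C a (cTens C b c) d) (cTensM C (cAssoc C a b c) (cId C d)))) \<and>
     (\<forall>a\<in>cOb C. \<forall>b\<in>cOb C.
         cComp C (cTensM C (cId C a) (cLU C b)) (cAssoc C a (cUnit C) b) =
         cTensM C (cRU C a) (cId C b))"

text \<open>dual_pair C X Y eta eps: X is a left dual of Y (equivalently Y is a right dual of X),
  with coevaluation eta : I \<rightarrow> Y \<otimes> X and evaluation eps : X \<otimes> Y \<rightarrow> I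
  satisfying the two snake (zig-zag) identities.\<close>

definition dual_pair :: "('o,'m) mcat \<Rightarrow> 'o \<Rightarrow> 'o \<Rightarrow> 'm \<Rightarrow> 'm \<Rightarrow> bool" where
  "dual_pair C X Y eta eps \<longleftrightarrow> X \<in> cOb C \<and> Y \<in> cOb C \<and>
     eta \<in> hom C (cUnit C) (cTens C Y X) \<and> eps \<in> hom C (cTens C X Y) (cUnit C) \<and>
     cComp C (cLU C X) (cComp C (cTensM C eps (cId C X))
        (cComp C (inv C (cAssoc C X Y X)) (cComp C (cTensM C (cId C X) eta) (inv C (cRU C X)))))
       = cId C X \<and>
     cComp C (cRU C Y) (cComp C (cTensM C (cId C Y) eps)
        (cComp C (cAssoc C Y X Y) (cComp C (cTensM C eta (cId C Y)) (inv C (cLU C Y)))))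
       = cId C Y"

definition has_right_dual :: "('o,'m) mcat \<Rightarrow> 'o \<Rightarrow> bool" where
  "has_right_dual C X \<longleftrightarrow> (\<exists>Y eta eps. dual_pair C X Y eta eps)"

definition has_left_dual :: "('o,'m) mcat \<Rightarrow> 'o \<Rightarrow> bool" where
  "has_left_dual C Y \<longleftrightarrow> (\<exists>X eta eps. dual_pair C X Y eta eps)"

definition rigid :: "('o,'m) mcat \<Rightarrow> bool" where
  "rigid C \<longleftrightarrow> is_monoidal C \<and>
     (\<forall>X\<in>cOb C. has_left_dual C X \<and> has_right_dual C X)"

text \<open>Objects: morphisms h of C.  A morphism (h, h', pA, pB) : h \<rightarrow> h' is a commuting
  square h' o pA = pB o h.  Everything else is componentwise.\<close>

definition arr_cat :: "('o,'m) mcat \<Rightarrow> ('m, 'm \<times> 'm \<times> 'm \<times> 'm) mcat" where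
  "arr_cat C = \<lparr>
     cOb = cAr C,
     cAr = {(h, h', p, q). h \<in> cAr C \<and> h' \<in> cAr C \<and>
              p \<in> hom C (cDom C h) (cDom C h') \<and> q \<in> hom C (cCod C h) (cCod C h') \<and>
              cComp C h' p = cComp C q h},
     cDom = (\<lambda>(h, h', p, q). h),
     cCod = (\<lambda>(h, h', p, q). h'),
     cComp = (\<lambda>(h', h'', p', q') (h, h1, p, q). (h, h'', cComp C p' p, cComp C q' q)),
     cId = (\<lambda>h. (h, h, cId C (cDom C h), cId C (cCod C h))),
     cTens = cTensM C,
     cTensM = (\<lambda>(h1, h1', p1, q1) (h2, h2', p2, q2).
                 (cTensM C h1 h2, cTensM C h1' h2', cTensM C p1 p2, cTensM C q1 q2)),
     cUnit = cId C (cUnit C),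
     cAssoc = (\<lambda>f g k. (cTensM C (cTensM C f g) k, cTensM C f (cTensM C g k),
                        cAssoc C (cDom C f) (cDom C g) (cDom C k),
                        cAssoc C (cCod C f) (cCod C g) (cCod C k))),
     cLU = (\<lambda>f. (cTensM C (cId C (cUnit C)) f, f, cLU C (cDom C f), cLU C (cCod C f))),
     cRU = (\<lambda>f. (cTensM C f (cId C (cUnit C)), f, cRU C (cDom C f), cRU C (cCod C f)))
   \<rparr>"

end

theory Submission
  imports Defs
begin


locale moncat =
  fixes C :: "('o,'m) mcat"
  assumes mon: "is_monoidal C"
begin

abbreviation Ob where "Ob \<equiv> cOb C"
abbreviation Ar where "Ar \<equiv> cAr C"
abbreviation Dm where "Dm \<equiv> cDom C"
abbreviation Cd where "Cd \<equiv> cCod C"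
abbreviation cp (infixr "\<cdot>" 55) where "g \<cdot> f \<equiv> cComp C g f"
abbreviation tm (infixr "\<otimes>" 60) where "f \<otimes> g \<equiv> cTensM C f g"
abbreviation ot (infixr "\<odot>" 60) where "a \<odot> b \<equiv> cTens C a b"
abbreviation ii where "ii a \<equiv> cId C a"
abbreviation I0 where "I0 \<equiv> cUnit C"
abbreviation aa where "aa \<equiv> cAssoc C"
abbreviation lu where "lu \<equiv> cLU C"
abbreviation ru where "ru \<equiv> cRU C"
abbreviation iv where "iv f \<equiv> Defs.inv C f"
abbreviation ai where "ai x y z \<equiv> Defs.inv C (cAssoc C x y z)"
abbreviation li where "li x \<equiv> Defs.inv C (cLU C x)"
abbreviation ri where "ri x \<equiv> Defs.inv C (cRU C x)"

lemma cat: "is_category C" using mon unfolding is_monoidal_def by blast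

lemma M: "I0 \<in> Ob" "\<forall>a\<in>Ob. \<forall>b\<in>Ob. a \<odot> b \<in> Ob"
  "\<forall>f\<in>Ar. \<forall>g\<in>Ar. f \<otimes> g \<in> hom C (Dm f \<odot> Dm g) (Cd f \<odot> Cd g)"
  "\<forall>a\<in>Ob. \<forall>b\<in>Ob. ii a \<otimes> ii b = ii (a \<odot> b)"
  "\<forall>f\<in>Ar. \<forall>g\<in>Ar. \<forall>f'\<in>Ar. \<forall>g'\<in>Ar. Cd f = Dm g \<longrightarrow> Cd f' = Dm g' \<longrightarrow> (g \<cdot> f) \<otimes> (g' \<cdot> f') = (g \<otimes> g') \<cdot> (f \<otimes> f')"
  "\<forall>a\<in>Ob. \<forall>b\<in>Ob. \<forall>c\<in>Ob. aa a b c \<in> hom C ((a \<odot> b) \<odot> c) (a \<odot> (b \<odot> c)) \<and> iso C (aa a b c)"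
  "\<forall>f\<in>Ar. \<forall>g\<in>Ar. \<forall>h\<in>Ar. aa (Cd f) (Cd g) (Cd h) \<cdot> ((f \<otimes> g) \<otimes> h) = (f \<otimes> (g \<otimes> h)) \<cdot> aa (Dm f) (Dm g) (Dm h)"
  "\<forall>a\<in>Ob. lu a \<in> hom C (I0 \<odot> a) a \<and> iso C (lu a)"
  "\<forall>f\<in>Ar. lu (Cd f) \<cdot> (ii I0 \<otimes> f) = f \<cdot> lu (Dm f)"
  "\<forall>a\<in>Ob. ru a \<in> hom C (a \<odot> I0) a \<and> iso C (ru a)"
  "\<forall>f\<in>Ar. ru (Cd f) \<cdot> (f \<otimes> ii I0) = f \<cdot> ru (Dm f)"
  using mon unfolding is_monoidal_def apply - by (elim conjE, assumption)+

lemma ob_dom[simp]: "f \<in> Ar \<Longrightarrow> Dm f \<in> Ob" using cat unfolding is_category_def by blast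
lemma ob_cod[simp]: "f \<in> Ar \<Longrightarrow> Cd f \<in> Ob" using cat unfolding is_category_def by blast
lemma ar_id[simp]: "a \<in> Ob \<Longrightarrow> ii a \<in> Ar" using cat unfolding is_category_def hom_def by blast
lemma dom_id[simp]: "a \<in> Ob \<Longrightarrow> Dm (ii a) = a" using cat unfolding is_category_def hom_def by blast
lemma cod_id[simp]: "a \<in> Ob \<Longrightarrow> Cd (ii a) = a" using cat unfolding is_category_def hom_def by blast
lemma ar_comp[simp]: "f \<in> Ar \<Longrightarrow> g \<in> Ar \<Longrightarrow> Cd f = Dm g \<Longrightarrow> g \<cdot> f \<in> Ar"
  using cat unfolding is_category_def hom_def by blast
lemma dom_comp[simp]: "f \<in> Ar \<Longrightarrow> g \<in> Ar \<Longrightarrow> Cd f = Dm g \<Longrightarrow> Dm (g \<cdot> f) = Dm f"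
  using cat unfolding is_category_def hom_def by blast
lemma cod_comp[simp]: "f \<in> Ar \<Longrightarrow> g \<in> Ar \<Longrightarrow> Cd f = Dm g \<Longrightarrow> Cd (g \<cdot> f) = Cd g"
  using cat unfolding is_category_def hom_def by blast
lemma comp_id_l[simp]: "f \<in> Ar \<Longrightarrow> Cd f = a \<Longrightarrow> ii a \<cdot> f = f"
  using cat unfolding is_category_def by blast
lemma comp_id_r[simp]: "f \<in> Ar \<Longrightarrow> Dm f = a \<Longrightarrow> f \<cdot> ii a = f"
  using cat unfolding is_category_def by blast
lemma comp_assoc[simp]: "f \<in> Ar \<Longrightarrow> g \<in> Ar \<Longrightarrow> h \<in> Ar \<Longrightarrow> Cd f = Dm g \<Longrightarrow> Cd g = Dm h \<Longrightarrow>
   (h \<cdot> g) \<cdot> f = h \<cdot> (g \<cdot> f)"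
  using cat unfolding is_category_def by metis

lemma ob_unit[simp]: "I0 \<in> Ob" using M by blast
lemma ob_tens[simp]: "a \<in> Ob \<Longrightarrow> b \<in> Ob \<Longrightarrow> a \<odot> b \<in> Ob" using M by blast
lemma ar_tens[simp]: "f \<in> Ar \<Longrightarrow> g \<in> Ar \<Longrightarrow> f \<otimes> g \<in> Ar" using M unfolding hom_def by blast
lemma dom_tens[simp]: "f \<in> Ar \<Longrightarrow> g \<in> Ar \<Longrightarrow> Dm (f \<otimes> g) = Dm f \<odot> Dm g" using M unfolding hom_def by blast
lemma cod_tens[simp]: "f \<in> Ar \<Longrightarrow> g \<in> Ar \<Longrightarrow> Cd (f \<otimes> g) = Cd f \<odot> Cd g" using M unfolding hom_def by blast
lemma tens_id: "a \<in> Ob \<Longrightarrow> b \<in> Ob \<Longrightarrow> ii a \<otimes> ii b = ii (a \<odot> b)" using M by blast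
lemma interchange: "f \<in> Ar \<Longrightarrow> g \<in> Ar \<Longrightarrow> f' \<in> Ar \<Longrightarrow> g' \<in> Ar \<Longrightarrow> Cd f = Dm g \<Longrightarrow> Cd f' = Dm g' \<Longrightarrow>
   (g \<cdot> f) \<otimes> (g' \<cdot> f') = (g \<otimes> g') \<cdot> (f \<otimes> f')" using M by blast
lemma merge: "f \<in> Ar \<Longrightarrow> g \<in> Ar \<Longrightarrow> f' \<in> Ar \<Longrightarrow> g' \<in> Ar \<Longrightarrow> Cd f = Dm g \<Longrightarrow> Cd f' = Dm g' \<Longrightarrow>
   (g \<otimes> g') \<cdot> (f \<otimes> f') = (g \<cdot> f) \<otimes> (g' \<cdot> f')" using interchange by simp
lemma merge_cont: "f \<in> Ar \<Longrightarrow> g \<in> Ar \<Longrightarrow> f' \<in> Ar \<Longrightarrow> g' \<in> Ar \<Longrightarrow> Cd f = Dm g \<Longrightarrow> Cd f' = Dm g' \<Longrightarrow>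
   y \<in> Ar \<Longrightarrow> Cd y = Dm f \<odot> Dm f' \<Longrightarrow>
   (g \<otimes> g') \<cdot> ((f \<otimes> f') \<cdot> y) = ((g \<cdot> f) \<otimes> (g' \<cdot> f')) \<cdot> y"
  by (metis comp_assoc merge ar_tens dom_tens cod_tens)

lemma aa_ar[simp]: "x \<in> Ob \<Longrightarrow> y \<in> Ob \<Longrightarrow> z \<in> Ob \<Longrightarrow> aa x y z \<in> Ar"
  using M unfolding hom_def by blast
lemma aa_dom[simp]: "x \<in> Ob \<Longrightarrow> y \<in> Ob \<Longrightarrow> z \<in> Ob \<Longrightarrow> Dm (aa x y z) = (x \<odot> y) \<odot> z"
  using M unfolding hom_def by blast
lemma aa_cod[simp]: "x \<in> Ob \<Longrightarrow> y \<in> Ob \<Longrightarrow> z \<in> Ob \<Longrightarrow> Cd (aa x y z) = x \<odot> (y \<odot> z)"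
  using M unfolding hom_def by blast
lemma aa_iso[simp]: "x \<in> Ob \<Longrightarrow> y \<in> Ob \<Longrightarrow> z \<in> Ob \<Longrightarrow> iso C (aa x y z)"
  using M by blast
lemma nat_a: "f \<in> Ar \<Longrightarrow> g \<in> Ar \<Longrightarrow> h \<in> Ar \<Longrightarrow>
  aa (Cd f) (Cd g) (Cd h) \<cdot> ((f \<otimes> g) \<otimes> h) = (f \<otimes> (g \<otimes> h)) \<cdot> aa (Dm f) (Dm g) (Dm h)"
  using M by blast

lemma lu_ar[simp]: "x \<in> Ob \<Longrightarrow> lu x \<in> Ar" using M unfolding hom_def by blast
lemma lu_dom[simp]: "x \<in> Ob \<Longrightarrow> Dm (lu x) = I0 \<odot> x" using M unfolding hom_def by blast
lemma lu_cod[simp]: "x \<in> Ob \<Longrightarrow> Cd (lu x) = x" using M unfolding hom_def by blast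
lemma lu_iso[simp]: "x \<in> Ob \<Longrightarrow> iso C (lu x)" using M by blast
lemma nat_l: "f \<in> Ar \<Longrightarrow> lu (Cd f) \<cdot> (ii I0 \<otimes> f) = f \<cdot> lu (Dm f)"
  using M by blast
lemma ru_ar[simp]: "x \<in> Ob \<Longrightarrow> ru x \<in> Ar" using M unfolding hom_def by blast
lemma ru_dom[simp]: "x \<in> Ob \<Longrightarrow> Dm (ru x) = x \<odot> I0" using M unfolding hom_def by blast
lemma ru_cod[simp]: "x \<in> Ob \<Longrightarrow> Cd (ru x) = x" using M unfolding hom_def by blast
lemma ru_iso[simp]: "x \<in> Ob \<Longrightarrow> iso C (ru x)" using M by blast
lemma nat_r: "f \<in> Ar \<Longrightarrow> ru (Cd f) \<cdot> (f \<otimes> ii I0) = f \<cdot> ru (Dm f)"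
  using M by blast

lemma inv_uniq:
  assumes "f \<in> Ar" "g \<in> Ar" "Dm g = Cd f" "Cd g = Dm f" "g \<cdot> f = ii (Dm f)" "f \<cdot> g = ii (Cd f)"
    "g' \<in> Ar" "Dm g' = Cd f" "Cd g' = Dm f" "g' \<cdot> f = ii (Dm f)" "f \<cdot> g' = ii (Cd f)"
  shows "g' = g"
proof -
  have "g' = g' \<cdot> (f \<cdot> g)" using assms by simp
  also have "\<dots> = (g' \<cdot> f) \<cdot> g" using assms comp_assoc[of g f g'] by metis
  also have "\<dots> = g" using assms by simp
  finally show ?thesis .
qed

lemma inv_eq:
  assumes "f \<in> Ar" "g \<in> Ar" "Dm g = Cd f" "Cd g = Dm f" "g \<cdot> f = ii (Dm f)" "f \<cdot> g = ii (Cd f)"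
  shows "iv f = g"
  unfolding inv_def hom_def
  apply (rule the_equality)
  using assms apply simp
  using inv_uniq[OF assms] by blast

lemma inv_props:
  assumes "iso C f"
  shows "iv f \<in> Ar \<and> Dm (iv f) = Cd f \<and> Cd (iv f) = Dm f \<and> iv f \<cdot> f = ii (Dm f) \<and> f \<cdot> iv f = ii (Cd f)"
proof -
  obtain g where "f \<in> Ar" "g \<in> Ar" "Dm g = Cd f" "Cd g = Dm f" "g \<cdot> f = ii (Dm f)" "f \<cdot> g = ii (Cd f)"
    using assms unfolding iso_def hom_def by blast
  with inv_eq[OF this] show ?thesis by simp
qed

lemma iso_ar: "iso C f \<Longrightarrow> f \<in> Ar" unfolding iso_def by blast
lemma inv_ar[simp]: "iso C f \<Longrightarrow> iv f \<in> Ar" using inv_props by blast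
lemma inv_dom[simp]: "iso C f \<Longrightarrow> Dm (iv f) = Cd f" using inv_props by blast
lemma inv_cod[simp]: "iso C f \<Longrightarrow> Cd (iv f) = Dm f" using inv_props by blast
lemma inv_l[simp]: "iso C f \<Longrightarrow> iv f \<cdot> f = ii (Dm f)" using inv_props by blast
lemma inv_r[simp]: "iso C f \<Longrightarrow> f \<cdot> iv f = ii (Cd f)" using inv_props by blast
lemma inv_l_cont[simp]: "iso C f \<Longrightarrow> y \<in> Ar \<Longrightarrow> Cd y = Dm f \<Longrightarrow> iv f \<cdot> (f \<cdot> y) = y"
  using comp_assoc[of y f "iv f"] iso_ar[of f] by simp
lemma inv_r_cont[simp]: "iso C f \<Longrightarrow> y \<in> Ar \<Longrightarrow> Cd y = Cd f \<Longrightarrow> f \<cdot> (iv f \<cdot> y) = y"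
  using comp_assoc[of y "iv f" f] iso_ar[of f] by simp

lemma inv_nat:
  assumes u: "iso C u" and v: "iso C v" and ab: "a \<in> Ar" "b \<in> Ar"
    and t: "Cd a = Dm u" "Dm b = Cd v" "Dm a = Dm v" "Cd b = Cd u"
    and eq: "u \<cdot> a = b \<cdot> v"
  shows "a \<cdot> iv v = iv u \<cdot> b"
proof -
  have uv: "u \<in> Ar" "v \<in> Ar" using u v iso_ar by auto
  have "iv u \<cdot> ((u \<cdot> a) \<cdot> iv v) = iv u \<cdot> ((b \<cdot> v) \<cdot> iv v)" using eq by simp
  thus ?thesis using u v ab t uv by simp
qed

end

context moncat begin

lemma ai_ar[simp]: "x \<in> Ob \<Longrightarrow> y \<in> Ob \<Longrightarrow> z \<in> Ob \<Longrightarrow> ai x y z \<in> Ar" by simp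
lemma ai_dom[simp]: "x \<in> Ob \<Longrightarrow> y \<in> Ob \<Longrightarrow> z \<in> Ob \<Longrightarrow> Dm (ai x y z) = x \<odot> (y \<odot> z)" by simp
lemma ai_cod[simp]: "x \<in> Ob \<Longrightarrow> y \<in> Ob \<Longrightarrow> z \<in> Ob \<Longrightarrow> Cd (ai x y z) = (x \<odot> y) \<odot> z" by simp
lemma li_ar[simp]: "x \<in> Ob \<Longrightarrow> li x \<in> Ar" by simp
lemma li_dom[simp]: "x \<in> Ob \<Longrightarrow> Dm (li x) = x" by simp
lemma li_cod[simp]: "x \<in> Ob \<Longrightarrow> Cd (li x) = I0 \<odot> x" by simp
lemma ri_ar[simp]: "x \<in> Ob \<Longrightarrow> ri x \<in> Ar" by simp
lemma ri_dom[simp]: "x \<in> Ob \<Longrightarrow> Dm (ri x) = x" by simp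
lemma ri_cod[simp]: "x \<in> Ob \<Longrightarrow> Cd (ri x) = x \<odot> I0" by simp

lemmas ty = ob_dom ob_cod ar_id dom_id cod_id ar_comp dom_comp cod_comp ob_unit ob_tens
  ar_tens dom_tens cod_tens aa_ar aa_dom aa_cod aa_iso lu_ar lu_dom lu_cod lu_iso
  ru_ar ru_dom ru_cod ru_iso inv_ar inv_dom inv_cod ai_ar ai_dom ai_cod li_ar li_dom li_cod
  ri_ar ri_dom ri_cod

lemmas mg = merge merge_cont tens_id

lemma nat_ai: "f \<in> Ar \<Longrightarrow> g \<in> Ar \<Longrightarrow> h \<in> Ar \<Longrightarrow>
  ai (Cd f) (Cd g) (Cd h) \<cdot> (f \<otimes> (g \<otimes> h)) = ((f \<otimes> g) \<otimes> h) \<cdot> ai (Dm f) (Dm g) (Dm h)"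
  using inv_nat[of "aa (Cd f) (Cd g) (Cd h)" "aa (Dm f) (Dm g) (Dm h)" "(f \<otimes> g) \<otimes> h" "f \<otimes> (g \<otimes> h)"]
    nat_a[of f g h] by simp

lemma nat_li: "f \<in> Ar \<Longrightarrow> li (Cd f) \<cdot> f = (ii I0 \<otimes> f) \<cdot> li (Dm f)"
  using inv_nat[of "lu (Cd f)" "lu (Dm f)" "ii I0 \<otimes> f" f] nat_l[of f] by simp

lemma nat_ri: "f \<in> Ar \<Longrightarrow> ri (Cd f) \<cdot> f = (f \<otimes> ii I0) \<cdot> ri (Dm f)"
  using inv_nat[of "ru (Cd f)" "ru (Dm f)" "f \<otimes> ii I0" f] nat_r[of f] by simp

lemma cont: "p \<cdot> q = r \<cdot> s \<Longrightarrow> p \<in> Ar \<Longrightarrow> q \<in> Ar \<Longrightarrow> r \<in> Ar \<Longrightarrow> s \<in> Ar \<Longrightarrow> w \<in> Ar \<Longrightarrow>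
  Cd q = Dm p \<Longrightarrow> Cd s = Dm r \<Longrightarrow> Cd w = Dm q \<Longrightarrow> Dm s = Dm q \<Longrightarrow> p \<cdot> (q \<cdot> w) = r \<cdot> (s \<cdot> w)"
  by (metis comp_assoc)

lemma nat_a_fc:
  assumes a: "f \<in> Ar" "g \<in> Ar" "h \<in> Ar" "w \<in> Ar" "Cd w = (Dm f \<odot> Dm g) \<odot> Dm h"
    and e: "Cd f = x" "Cd g = y" "Cd h = z"
  shows "aa x y z \<cdot> (((f \<otimes> g) \<otimes> h) \<cdot> w) = (f \<otimes> (g \<otimes> h)) \<cdot> (aa (Dm f) (Dm g) (Dm h) \<cdot> w)"
  unfolding e[symmetric] by (rule cont[OF nat_a]) (use a e in auto)

lemma nat_a_rc:
  assumes a: "f \<in> Ar" "g \<in> Ar" "h \<in> Ar" "w \<in> Ar" "Cd w = (x \<odot> y) \<odot> z"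
    and e: "Dm f = x" "Dm g = y" "Dm h = z"
  shows "(f \<otimes> (g \<otimes> h)) \<cdot> (aa x y z \<cdot> w) = aa (Cd f) (Cd g) (Cd h) \<cdot> (((f \<otimes> g) \<otimes> h) \<cdot> w)"
  unfolding e[symmetric] by (rule cont[OF nat_a[symmetric]]) (use a e in auto)

lemma nat_ai_fc:
  assumes a: "f \<in> Ar" "g \<in> Ar" "h \<in> Ar" "w \<in> Ar" "Cd w = Dm f \<odot> (Dm g \<odot> Dm h)"
    and e: "Cd f = x" "Cd g = y" "Cd h = z"
  shows "ai x y z \<cdot> ((f \<otimes> (g \<otimes> h)) \<cdot> w) = ((f \<otimes> g) \<otimes> h) \<cdot> (ai (Dm f) (Dm g) (Dm h) \<cdot> w)"
  unfolding e[symmetric] by (rule cont[OF nat_ai]) (use a e in auto)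

lemma nat_ai_rc:
  assumes a: "f \<in> Ar" "g \<in> Ar" "h \<in> Ar" "w \<in> Ar" "Cd w = x \<odot> (y \<odot> z)"
    and e: "Dm f = x" "Dm g = y" "Dm h = z"
  shows "((f \<otimes> g) \<otimes> h) \<cdot> (ai x y z \<cdot> w) = ai (Cd f) (Cd g) (Cd h) \<cdot> ((f \<otimes> (g \<otimes> h)) \<cdot> w)"
  unfolding e[symmetric] by (rule cont[OF nat_ai[symmetric]]) (use a e in auto)

lemma nat_l_fc:
  assumes a: "f \<in> Ar" "w \<in> Ar" "Cd w = I0 \<odot> Dm f"
    and e: "Cd f = x"
  shows "lu x \<cdot> ((ii I0 \<otimes> f) \<cdot> w) = f \<cdot> (lu (Dm f) \<cdot> w)"
  unfolding e[symmetric] by (rule cont[OF nat_l]) (use a e in auto)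

lemma nat_l_rc:
  assumes a: "f \<in> Ar" "w \<in> Ar" "Cd w = I0 \<odot> x"
    and e: "Dm f = x"
  shows "f \<cdot> (lu x \<cdot> w) = lu (Cd f) \<cdot> ((ii I0 \<otimes> f) \<cdot> w)"
  unfolding e[symmetric] by (rule cont[OF nat_l[symmetric]]) (use a e in auto)

lemma nat_r_fc:
  assumes a: "f \<in> Ar" "w \<in> Ar" "Cd w = Dm f \<odot> I0"
    and e: "Cd f = x"
  shows "ru x \<cdot> ((f \<otimes> ii I0) \<cdot> w) = f \<cdot> (ru (Dm f) \<cdot> w)"
  unfolding e[symmetric] by (rule cont[OF nat_r]) (use a e in auto)

lemma nat_r_rc:
  assumes a: "f \<in> Ar" "w \<in> Ar" "Cd w = x \<odot> I0"
    and e: "Dm f = x"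
  shows "f \<cdot> (ru x \<cdot> w) = ru (Cd f) \<cdot> ((f \<otimes> ii I0) \<cdot> w)"
  unfolding e[symmetric] by (rule cont[OF nat_r[symmetric]]) (use a e in auto)

lemma nat_li_f: "f \<in> Ar \<Longrightarrow> Cd f = x \<Longrightarrow> li x \<cdot> f = (ii I0 \<otimes> f) \<cdot> li (Dm f)"
  using nat_li by blast
lemma nat_ri_f: "f \<in> Ar \<Longrightarrow> Cd f = x \<Longrightarrow> ri x \<cdot> f = (f \<otimes> ii I0) \<cdot> ri (Dm f)"
  using nat_ri by blast

lemma cancel_iso: "iso C u \<Longrightarrow> p \<in> Ar \<Longrightarrow> Dm p = Cd u \<Longrightarrow> p \<cdot> u = u \<Longrightarrow> p = ii (Cd u)"
proof -
  assume u: "iso C u" and p: "p \<in> Ar" "Dm p = Cd u" "p \<cdot> u = u"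
  have uA: "u \<in> Ar" using u iso_ar by blast
  have "p = p \<cdot> (u \<cdot> iv u)" using u p by simp
  also have "\<dots> = (p \<cdot> u) \<cdot> iv u" by (rule comp_assoc[symmetric]) (use u p uA in simp_all)
  also have "\<dots> = ii (Cd u)" using p u by simp
  finally show ?thesis .
qed

end

context moncat begin

lemma dp_unfold:
  assumes "dual_pair C X Y eta eps"
  shows "X \<in> Ob" "Y \<in> Ob" "eta \<in> Ar" "Dm eta = I0" "Cd eta = Y \<odot> X" "eps \<in> Ar" "Dm eps = X \<odot> Y" "Cd eps = I0"
    "lu X \<cdot> (eps \<otimes> ii X) \<cdot> ai X Y X \<cdot> (ii X \<otimes> eta) \<cdot> ri X = ii X"
    "ru Y \<cdot> (ii Y \<otimes> eps) \<cdot> aa Y X Y \<cdot> (eta \<otimes> ii Y) \<cdot> li Y = ii Y"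
  using assms unfolding dual_pair_def hom_def by auto

lemma T1:
  assumes dp: "dual_pair C X Y eta eps" and u: "iso C u" "Dm u = X" "Cd u = X'"
  shows "dual_pair C X' Y ((ii Y \<otimes> u) \<cdot> eta) (eps \<cdot> (iv u \<otimes> ii Y))"
proof -
  note d = dp_unfold[OF dp]
  have uA: "u \<in> Ar" using u iso_ar by blast
  have X': "X' \<in> Ob" using uA u by auto
  note tt = d(1-8) u uA X'
  have S1: "lu X' \<cdot> ((eps \<cdot> (iv u \<otimes> ii Y)) \<otimes> ii X') \<cdot> ai X' Y X' \<cdot> (ii X' \<otimes> ((ii Y \<otimes> u) \<cdot> eta)) \<cdot> ri X' = ii X'" (is "?S = _")
  proof -
    have "(lu X' \<cdot> ((eps \<cdot> (iv u \<otimes> ii Y)) \<otimes> ii X') \<cdot> ai X' Y X' \<cdot> (ii X' \<otimes> ((ii Y \<otimes> u) \<cdot> eta)) \<cdot> ri X') \<cdot> u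
      = lu X' \<cdot> ((eps \<cdot> (iv u \<otimes> ii Y)) \<otimes> ii X') \<cdot> ai X' Y X' \<cdot> (ii X' \<otimes> ((ii Y \<otimes> u) \<cdot> eta)) \<cdot> ri X' \<cdot> u"
      using tt by simp
    also have "\<dots> = lu X' \<cdot> ((eps \<cdot> (iv u \<otimes> ii Y)) \<otimes> ii X') \<cdot> ai X' Y X' \<cdot> (ii X' \<otimes> ((ii Y \<otimes> u) \<cdot> eta)) \<cdot> (u \<otimes> ii I0) \<cdot> ri X"
      using tt by (simp only: ty nat_ri_f)
    also have "\<dots> = lu X' \<cdot> ((eps \<cdot> (iv u \<otimes> ii Y)) \<otimes> ii X') \<cdot> ai X' Y X' \<cdot> (u \<otimes> (ii Y \<otimes> u)) \<cdot> (ii X \<otimes> eta) \<cdot> ri X"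
      using tt by (simp add: mg)
    also have "\<dots> = lu X' \<cdot> ((eps \<cdot> (iv u \<otimes> ii Y)) \<otimes> ii X') \<cdot> ((u \<otimes> ii Y) \<otimes> u) \<cdot> ai X Y X \<cdot> (ii X \<otimes> eta) \<cdot> ri X"
      using tt by (simp only: ty nat_ai_fc)
    also have "\<dots> = lu X' \<cdot> (ii I0 \<otimes> u) \<cdot> (eps \<otimes> ii X) \<cdot> ai X Y X \<cdot> (ii X \<otimes> eta) \<cdot> ri X"
      using tt by (simp add: mg)
    also have "\<dots> = u \<cdot> lu X \<cdot> (eps \<otimes> ii X) \<cdot> ai X Y X \<cdot> (ii X \<otimes> eta) \<cdot> ri X"
      using tt by (simp only: ty nat_l_fc)
    also have "\<dots> = u" using tt d(9) by simp
    finally have E: "?S \<cdot> u = u" .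
    have "?S = ii (Cd u)" by (rule cancel_iso[OF u(1) _ _ E]) (use tt in simp_all)
    with u(3) show ?thesis by simp
  qed
  have S2: "ru Y \<cdot> (ii Y \<otimes> (eps \<cdot> (iv u \<otimes> ii Y))) \<cdot> aa Y X' Y \<cdot> (((ii Y \<otimes> u) \<cdot> eta) \<otimes> ii Y) \<cdot> li Y = ii Y"
  proof -
    have "ru Y \<cdot> (ii Y \<otimes> (eps \<cdot> (iv u \<otimes> ii Y))) \<cdot> aa Y X' Y \<cdot> (((ii Y \<otimes> u) \<cdot> eta) \<otimes> ii Y) \<cdot> li Y
      = ru Y \<cdot> (ii Y \<otimes> eps) \<cdot> (ii Y \<otimes> (iv u \<otimes> ii Y)) \<cdot> aa Y X' Y \<cdot> (((ii Y \<otimes> u) \<cdot> eta) \<otimes> ii Y) \<cdot> li Y"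
      using tt by (simp add: mg)
    also have "\<dots> = ru Y \<cdot> (ii Y \<otimes> eps) \<cdot> aa Y X Y \<cdot> ((ii Y \<otimes> iv u) \<otimes> ii Y) \<cdot> (((ii Y \<otimes> u) \<cdot> eta) \<otimes> ii Y) \<cdot> li Y"
      using tt by (simp only: ty nat_a_rc)
    also have "\<dots> = ru Y \<cdot> (ii Y \<otimes> eps) \<cdot> aa Y X Y \<cdot> (eta \<otimes> ii Y) \<cdot> li Y"
      using tt by (simp add: mg)
    also have "\<dots> = ii Y" using d(10) .
    finally show ?thesis .
  qed
  show ?thesis unfolding dual_pair_def hom_def using tt S1 S2 by simp
qed

end

context moncat begin

lemma T2:
  assumes dp: "dual_pair C X Y eta eps" and u: "iso C u" "Dm u = Y" "Cd u = Y'"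
  shows "dual_pair C X Y' ((u \<otimes> ii X) \<cdot> eta) (eps \<cdot> (ii X \<otimes> iv u))"
proof -
  note d = dp_unfold[OF dp]
  have uA: "u \<in> Ar" using u iso_ar by blast
  have Y': "Y' \<in> Ob" using uA u by auto
  note tt = d(1-8) u uA Y'
  have S1: "lu X \<cdot> ((eps \<cdot> (ii X \<otimes> iv u)) \<otimes> ii X) \<cdot> ai X Y' X \<cdot> (ii X \<otimes> ((u \<otimes> ii X) \<cdot> eta)) \<cdot> ri X = ii X"
  proof -
    have "lu X \<cdot> ((eps \<cdot> (ii X \<otimes> iv u)) \<otimes> ii X) \<cdot> ai X Y' X \<cdot> (ii X \<otimes> ((u \<otimes> ii X) \<cdot> eta)) \<cdot> ri X
      = lu X \<cdot> (eps \<otimes> ii X) \<cdot> ((ii X \<otimes> iv u) \<otimes> ii X) \<cdot> ai X Y' X \<cdot> (ii X \<otimes> ((u \<otimes> ii X) \<cdot> eta)) \<cdot> ri X"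
      using tt by (simp add: mg)
    also have "\<dots> = lu X \<cdot> (eps \<otimes> ii X) \<cdot> ai X Y X \<cdot> (ii X \<otimes> (iv u \<otimes> ii X)) \<cdot> (ii X \<otimes> ((u \<otimes> ii X) \<cdot> eta)) \<cdot> ri X"
      using tt by (simp only: ty nat_ai_rc)
    also have "\<dots> = lu X \<cdot> (eps \<otimes> ii X) \<cdot> ai X Y X \<cdot> (ii X \<otimes> eta) \<cdot> ri X"
      using tt by (simp add: mg)
    also have "\<dots> = ii X" using d(9) .
    finally show ?thesis .
  qed
  have S2: "ru Y' \<cdot> (ii Y' \<otimes> (eps \<cdot> (ii X \<otimes> iv u))) \<cdot> aa Y' X Y' \<cdot> (((u \<otimes> ii X) \<cdot> eta) \<otimes> ii Y') \<cdot> li Y' = ii Y'" (is "?S = _")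
  proof -
    have "(ru Y' \<cdot> (ii Y' \<otimes> (eps \<cdot> (ii X \<otimes> iv u))) \<cdot> aa Y' X Y' \<cdot> (((u \<otimes> ii X) \<cdot> eta) \<otimes> ii Y') \<cdot> li Y') \<cdot> u
      = ru Y' \<cdot> (ii Y' \<otimes> (eps \<cdot> (ii X \<otimes> iv u))) \<cdot> aa Y' X Y' \<cdot> (((u \<otimes> ii X) \<cdot> eta) \<otimes> ii Y') \<cdot> li Y' \<cdot> u"
      using tt by simp
    also have "\<dots> = ru Y' \<cdot> (ii Y' \<otimes> (eps \<cdot> (ii X \<otimes> iv u))) \<cdot> aa Y' X Y' \<cdot> (((u \<otimes> ii X) \<cdot> eta) \<otimes> ii Y') \<cdot> (ii I0 \<otimes> u) \<cdot> li Y"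
      using tt by (simp only: ty nat_li_f)
    also have "\<dots> = ru Y' \<cdot> (ii Y' \<otimes> (eps \<cdot> (ii X \<otimes> iv u))) \<cdot> aa Y' X Y' \<cdot> ((u \<otimes> ii X) \<otimes> u) \<cdot> (eta \<otimes> ii Y) \<cdot> li Y"
      using tt by (simp add: mg)
    also have "\<dots> = ru Y' \<cdot> (ii Y' \<otimes> (eps \<cdot> (ii X \<otimes> iv u))) \<cdot> (u \<otimes> (ii X \<otimes> u)) \<cdot> aa Y X Y \<cdot> (eta \<otimes> ii Y) \<cdot> li Y"
      using tt by (simp only: ty nat_a_fc)
    also have "\<dots> = ru Y' \<cdot> (u \<otimes> ii I0) \<cdot> (ii Y \<otimes> eps) \<cdot> aa Y X Y \<cdot> (eta \<otimes> ii Y) \<cdot> li Y"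
      using tt by (simp add: mg)
    also have "\<dots> = u \<cdot> ru Y \<cdot> (ii Y \<otimes> eps) \<cdot> aa Y X Y \<cdot> (eta \<otimes> ii Y) \<cdot> li Y"
      using tt by (simp only: ty nat_r_fc)
    also have "\<dots> = u" using tt d(10) by simp
    finally have E: "?S \<cdot> u = u" .
    have "?S = ii (Cd u)" by (rule cancel_iso[OF u(1) _ _ E]) (use tt in simp_all)
    with u(3) show ?thesis by simp
  qed
  show ?thesis unfolding dual_pair_def hom_def using tt S1 S2 by simp
qed

lemma right_iso:
  assumes fg: "f \<in> Ar" "g \<in> Ar"
    and d0: "dual_pair C (Dm f) (Dm g) e0 p0" and d1: "dual_pair C (Cd f) (Cd g) e1 p1"
    and sq1: "(g \<otimes> f) \<cdot> e0 = e1" and sq2: "p0 = p1 \<cdot> (f \<otimes> g)"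
  shows "iso C f"
proof -
  note a = dp_unfold[OF d0] and b = dp_unfold[OF d1]
  note tt = a(1-8) b(1-8) fg
  define h where "h = lu (Dm f) \<cdot> (p1 \<otimes> ii (Dm f)) \<cdot> ai (Cd f) (Cd g) (Dm f) \<cdot> (ii (Cd f) \<otimes> ((g \<otimes> ii (Dm f)) \<cdot> e0)) \<cdot> ri (Cd f)"
  have hA: "h \<in> Ar" "Dm h = Cd f" "Cd h = Dm f" unfolding h_def using tt by simp_all
  have "h \<cdot> f = lu (Dm f) \<cdot> (p1 \<otimes> ii (Dm f)) \<cdot> ai (Cd f) (Cd g) (Dm f) \<cdot> (ii (Cd f) \<otimes> ((g \<otimes> ii (Dm f)) \<cdot> e0)) \<cdot> ri (Cd f) \<cdot> f"
    unfolding h_def using tt by simp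
  also have "\<dots> = lu (Dm f) \<cdot> (p1 \<otimes> ii (Dm f)) \<cdot> ai (Cd f) (Cd g) (Dm f) \<cdot> (ii (Cd f) \<otimes> ((g \<otimes> ii (Dm f)) \<cdot> e0)) \<cdot> (f \<otimes> ii I0) \<cdot> ri (Dm f)"
    using tt by (simp only: ty nat_ri_f)
  also have "\<dots> = lu (Dm f) \<cdot> (p1 \<otimes> ii (Dm f)) \<cdot> ai (Cd f) (Cd g) (Dm f) \<cdot> (f \<otimes> (g \<otimes> ii (Dm f))) \<cdot> (ii (Dm f) \<otimes> e0) \<cdot> ri (Dm f)"
    using tt by (simp add: mg)
  also have "\<dots> = lu (Dm f) \<cdot> (p1 \<otimes> ii (Dm f)) \<cdot> ((f \<otimes> g) \<otimes> ii (Dm f)) \<cdot> ai (Dm f) (Dm g) (Dm f) \<cdot> (ii (Dm f) \<otimes> e0) \<cdot> ri (Dm f)"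
    using tt by (simp only: ty nat_ai_fc)
  also have "\<dots> = lu (Dm f) \<cdot> (p0 \<otimes> ii (Dm f)) \<cdot> ai (Dm f) (Dm g) (Dm f) \<cdot> (ii (Dm f) \<otimes> e0) \<cdot> ri (Dm f)"
    using tt sq2 by (simp add: mg)
  also have "\<dots> = ii (Dm f)" using a(9) .
  finally have L: "h \<cdot> f = ii (Dm f)" .
  have "f \<cdot> h = f \<cdot> lu (Dm f) \<cdot> (p1 \<otimes> ii (Dm f)) \<cdot> ai (Cd f) (Cd g) (Dm f) \<cdot> (ii (Cd f) \<otimes> ((g \<otimes> ii (Dm f)) \<cdot> e0)) \<cdot> ri (Cd f)"
    unfolding h_def ..
  also have "\<dots> = lu (Cd f) \<cdot> (ii I0 \<otimes> f) \<cdot> (p1 \<otimes> ii (Dm f)) \<cdot> ai (Cd f) (Cd g) (Dm f) \<cdot> (ii (Cd f) \<otimes> ((g \<otimes> ii (Dm f)) \<cdot> e0)) \<cdot> ri (Cd f)"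
    using tt by (simp only: ty nat_l_rc)
  also have "\<dots> = lu (Cd f) \<cdot> (p1 \<otimes> ii (Cd f)) \<cdot> ((ii (Cd f) \<otimes> ii (Cd g)) \<otimes> f) \<cdot> ai (Cd f) (Cd g) (Dm f) \<cdot> (ii (Cd f) \<otimes> ((g \<otimes> ii (Dm f)) \<cdot> e0)) \<cdot> ri (Cd f)"
    using tt by (simp add: mg)
  also have "\<dots> = lu (Cd f) \<cdot> (p1 \<otimes> ii (Cd f)) \<cdot> ai (Cd f) (Cd g) (Cd f) \<cdot> (ii (Cd f) \<otimes> (ii (Cd g) \<otimes> f)) \<cdot> (ii (Cd f) \<otimes> ((g \<otimes> ii (Dm f)) \<cdot> e0)) \<cdot> ri (Cd f)"
    using tt by (simp only: ty nat_ai_rc)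
  also have "\<dots> = lu (Cd f) \<cdot> (p1 \<otimes> ii (Cd f)) \<cdot> ai (Cd f) (Cd g) (Cd f) \<cdot> (ii (Cd f) \<otimes> e1) \<cdot> ri (Cd f)"
    using tt sq1 by (simp add: mg)
  also have "\<dots> = ii (Cd f)" using b(9) .
  finally have R: "f \<cdot> h = ii (Cd f)" .
  show ?thesis unfolding iso_def hom_def using hA L R fg by blast
qed

lemma left_iso:
  assumes fg: "f \<in> Ar" "g \<in> Ar"
    and d0: "dual_pair C (Dm g) (Dm f) e0 p0" and d1: "dual_pair C (Cd g) (Cd f) e1 p1"
    and sq1: "(f \<otimes> g) \<cdot> e0 = e1" and sq2: "p0 = p1 \<cdot> (g \<otimes> f)"
  shows "iso C f"
proof -
  note a = dp_unfold[OF d0] and b = dp_unfold[OF d1]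
  note tt = a(1-8) b(1-8) fg
  define h where "h = ru (Dm f) \<cdot> (ii (Dm f) \<otimes> p1) \<cdot> aa (Dm f) (Cd g) (Cd f) \<cdot> (((ii (Dm f) \<otimes> g) \<cdot> e0) \<otimes> ii (Cd f)) \<cdot> li (Cd f)"
  have hA: "h \<in> Ar" "Dm h = Cd f" "Cd h = Dm f" unfolding h_def using tt by simp_all
  have "h \<cdot> f = ru (Dm f) \<cdot> (ii (Dm f) \<otimes> p1) \<cdot> aa (Dm f) (Cd g) (Cd f) \<cdot> (((ii (Dm f) \<otimes> g) \<cdot> e0) \<otimes> ii (Cd f)) \<cdot> li (Cd f) \<cdot> f"
    unfolding h_def using tt by simp
  also have "\<dots> = ru (Dm f) \<cdot> (ii (Dm f) \<otimes> p1) \<cdot> aa (Dm f) (Cd g) (Cd f) \<cdot> (((ii (Dm f) \<otimes> g) \<cdot> e0) \<otimes> ii (Cd f)) \<cdot> (ii I0 \<otimes> f) \<cdot> li (Dm f)"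
    using tt by (simp only: ty nat_li_f)
  also have "\<dots> = ru (Dm f) \<cdot> (ii (Dm f) \<otimes> p1) \<cdot> aa (Dm f) (Cd g) (Cd f) \<cdot> ((ii (Dm f) \<otimes> g) \<otimes> f) \<cdot> (e0 \<otimes> ii (Dm f)) \<cdot> li (Dm f)"
    using tt by (simp add: mg)
  also have "\<dots> = ru (Dm f) \<cdot> (ii (Dm f) \<otimes> p1) \<cdot> (ii (Dm f) \<otimes> (g \<otimes> f)) \<cdot> aa (Dm f) (Dm g) (Dm f) \<cdot> (e0 \<otimes> ii (Dm f)) \<cdot> li (Dm f)"
    using tt by (simp only: ty nat_a_fc)
  also have "\<dots> = ru (Dm f) \<cdot> (ii (Dm f) \<otimes> p0) \<cdot> aa (Dm f) (Dm g) (Dm f) \<cdot> (e0 \<otimes> ii (Dm f)) \<cdot> li (Dm f)"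
    using tt sq2 by (simp add: mg)
  also have "\<dots> = ii (Dm f)" using a(10) .
  finally have L: "h \<cdot> f = ii (Dm f)" .
  have "f \<cdot> h = f \<cdot> ru (Dm f) \<cdot> (ii (Dm f) \<otimes> p1) \<cdot> aa (Dm f) (Cd g) (Cd f) \<cdot> (((ii (Dm f) \<otimes> g) \<cdot> e0) \<otimes> ii (Cd f)) \<cdot> li (Cd f)"
    unfolding h_def ..
  also have "\<dots> = ru (Cd f) \<cdot> (f \<otimes> ii I0) \<cdot> (ii (Dm f) \<otimes> p1) \<cdot> aa (Dm f) (Cd g) (Cd f) \<cdot> (((ii (Dm f) \<otimes> g) \<cdot> e0) \<otimes> ii (Cd f)) \<cdot> li (Cd f)"
    using tt by (simp only: ty nat_r_rc)
  also have "\<dots> = ru (Cd f) \<cdot> (ii (Cd f) \<otimes> p1) \<cdot> (f \<otimes> (ii (Cd g) \<otimes> ii (Cd f))) \<cdot> aa (Dm f) (Cd g) (Cd f) \<cdot> (((ii (Dm f) \<otimes> g) \<cdot> e0) \<otimes> ii (Cd f)) \<cdot> li (Cd f)"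
    using tt by (simp add: mg)
  also have "\<dots> = ru (Cd f) \<cdot> (ii (Cd f) \<otimes> p1) \<cdot> aa (Cd f) (Cd g) (Cd f) \<cdot> ((f \<otimes> ii (Cd g)) \<otimes> ii (Cd f)) \<cdot> (((ii (Dm f) \<otimes> g) \<cdot> e0) \<otimes> ii (Cd f)) \<cdot> li (Cd f)"
    using tt by (simp only: ty nat_a_rc)
  also have "\<dots> = ru (Cd f) \<cdot> (ii (Cd f) \<otimes> p1) \<cdot> aa (Cd f) (Cd g) (Cd f) \<cdot> (e1 \<otimes> ii (Cd f)) \<cdot> li (Cd f)"
    using tt sq1 by (simp add: mg)
  also have "\<dots> = ii (Cd f)" using b(10) .
  finally have R: "f \<cdot> h = ii (Cd f)" .
  show ?thesis unfolding iso_def hom_def using hA L R fg by blast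
qed

end

context moncat begin

abbreviation A where "A \<equiv> arr_cat C"

lemma arr_simps:
  "cOb A = Ar"
  "(h,h',p,q) \<in> cAr A \<longleftrightarrow> h \<in> Ar \<and> h' \<in> Ar \<and> p \<in> hom C (Dm h) (Dm h') \<and> q \<in> hom C (Cd h) (Cd h') \<and> h' \<cdot> p = q \<cdot> h"
  "cDom A (h,h',p,q) = h" "cCod A (h,h',p,q) = h'"
  "cComp A (h',h'',p',q') (h,h1,p,q) = (h,h'',p' \<cdot> p, q' \<cdot> q)"
  "cId A x = (x, x, ii (Dm x), ii (Cd x))"
  "cTens A = cTensM C"
  "cTensM A (a,b,c,d) (e,f,g,k) = (a \<otimes> e, b \<otimes> f, c \<otimes> g, d \<otimes> k)"
  "cUnit A = ii I0"
  "cAssoc A x y z = ((x \<otimes> y) \<otimes> z, x \<otimes> (y \<otimes> z), aa (Dm x) (Dm y) (Dm z), aa (Cd x) (Cd y) (Cd z))"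
  "cLU A x = (ii I0 \<otimes> x, x, lu (Dm x), lu (Cd x))"
  "cRU A x = (x \<otimes> ii I0, x, ru (Dm x), ru (Cd x))"
  by (simp_all add: arr_cat_def)

lemma inv_arr:
  assumes "h \<in> Ar" "h' \<in> Ar" "iso C p" "iso C q" "Dm p = Dm h" "Cd p = Dm h'" "Dm q = Cd h" "Cd q = Cd h'"
    "h' \<cdot> p = q \<cdot> h"
  shows "Defs.inv A (h,h',p,q) = (h', h, iv p, iv q)"
proof -
  have pq: "p \<in> Ar" "q \<in> Ar" using assms iso_ar by auto
  have sq: "h \<cdot> iv p = iv q \<cdot> h'"
    using inv_nat[of q p h h'] assms pq by simp
  show ?thesis
    unfolding inv_def[of "arr_cat C"]
  proof (rule the_equality)
    show "(h', h, iv p, iv q) \<in> hom A (cCod A (h, h', p, q)) (cDom A (h, h', p, q)) \<and>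
      cComp A (h', h, iv p, iv q) (h, h', p, q) = cId A (cDom A (h, h', p, q)) \<and>
      cComp A (h, h', p, q) (h', h, iv p, iv q) = cId A (cCod A (h, h', p, q))"
      using assms pq sq by (simp add: hom_def arr_simps)
  next
    fix g assume g: "g \<in> hom A (cCod A (h, h', p, q)) (cDom A (h, h', p, q)) \<and>
      cComp A g (h, h', p, q) = cId A (cDom A (h, h', p, q)) \<and>
      cComp A (h, h', p, q) g = cId A (cCod A (h, h', p, q))"
    obtain a b c d where gd: "g = (a,b,c,d)" by (cases g rule: prod_cases4)
    from g have *: "a = h'" "b = h" "c \<in> Ar" "Dm c = Dm h'" "Cd c = Dm h" "d \<in> Ar" "Dm d = Cd h'" "Cd d = Cd h"
      "c \<cdot> p = ii (Dm h)" "p \<cdot> c = ii (Dm h')" "d \<cdot> q = ii (Cd h)" "q \<cdot> d = ii (Cd h')"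
      unfolding gd by (auto simp: hom_def arr_simps)
    have "iv p = c" using inv_eq[of p c] * pq assms by simp
    moreover have "iv q = d" using inv_eq[of q d] * pq assms by simp
    ultimately show "g = (h', h, iv p, iv q)" using gd * by simp
  qed
qed

lemma arr_dual_tuple:
  "dual_pair A X Y (a,b,c,d) (e,f,g,k) \<longleftrightarrow> X \<in> Ar \<and> Y \<in> Ar \<and> a = ii I0 \<and> b = Y \<otimes> X \<and> e = X \<otimes> Y \<and> f = ii I0 \<and>
     dual_pair C (Dm X) (Dm Y) c g \<and> dual_pair C (Cd X) (Cd Y) d k \<and> (Y \<otimes> X) \<cdot> c = d \<and> g = k \<cdot> (X \<otimes> Y)"
proof (cases "X \<in> Ar \<and> Y \<in> Ar")
  case False
  then show ?thesis unfolding dual_pair_def by (auto simp: arr_simps)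
next
  case True
  have ia: "Defs.inv A ((x \<otimes> y) \<otimes> z, x \<otimes> (y \<otimes> z), aa (Dm x) (Dm y) (Dm z), aa (Cd x) (Cd y) (Cd z))
     = (x \<otimes> (y \<otimes> z), (x \<otimes> y) \<otimes> z, ai (Dm x) (Dm y) (Dm z), ai (Cd x) (Cd y) (Cd z))"
    if "x \<in> Ar" "y \<in> Ar" "z \<in> Ar" for x y z
    using that nat_a[of x y z] by (intro inv_arr) simp_all
  have il: "Defs.inv A (ii I0 \<otimes> x, x, lu (Dm x), lu (Cd x)) = (x, ii I0 \<otimes> x, li (Dm x), li (Cd x))"
    if "x \<in> Ar" for x
    using that nat_l[of x] by (intro inv_arr) simp_all
  have ir: "Defs.inv A (x \<otimes> ii I0, x, ru (Dm x), ru (Cd x)) = (x, x \<otimes> ii I0, ri (Dm x), ri (Cd x))"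
    if "x \<in> Ar" for x
    using that nat_r[of x] by (intro inv_arr) simp_all
  show ?thesis
    unfolding dual_pair_def using True
    by (auto simp: ia il ir hom_def arr_simps)
qed

end

context moncat begin

lemma right_main:
  assumes rg: "\<forall>X\<in>Ob. has_left_dual C X \<and> has_right_dual C X" and f: "f \<in> Ar"
  shows "has_right_dual A f \<longleftrightarrow> iso C f"
proof
  assume "has_right_dual A f"
  then obtain Y eta eps where dp: "dual_pair A f Y eta eps" unfolding has_right_dual_def by blast
  obtain a b c d where e1: "eta = (a,b,c,d)" by (cases eta rule: prod_cases4)
  obtain e g1 g k where e2: "eps = (e,g1,g,k)" by (cases eps rule: prod_cases4)
  from dp[unfolded e1 e2 arr_dual_tuple] show "iso C f"
    using right_iso[of f Y c g d k] by blast
next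
  assume fi: "iso C f"
  obtain Dl eta eps where dp: "dual_pair C (Dm f) Dl eta eps"
    using rg ob_dom[OF f] unfolding has_right_dual_def by blast
  note d = dp_unfold[OF dp]
  have T: "dual_pair C (Cd f) Dl ((ii Dl \<otimes> f) \<cdot> eta) (eps \<cdot> (iv f \<otimes> ii Dl))"
    using T1[OF dp fi refl refl] .
  have "dual_pair A f (ii Dl) (ii I0, ii Dl \<otimes> f, eta, (ii Dl \<otimes> f) \<cdot> eta) (f \<otimes> ii Dl, ii I0, eps, eps \<cdot> (iv f \<otimes> ii Dl))"
    unfolding arr_dual_tuple using d(1-8) f fi dp T by (simp add: mg)
  thus "has_right_dual A f" unfolding has_right_dual_def by blast
qed

lemma left_main:
  assumes rg: "\<forall>X\<in>Ob. has_left_dual C X \<and> has_right_dual C X" and f: "f \<in> Ar"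
  shows "has_left_dual A f \<longleftrightarrow> iso C f"
proof
  assume "has_left_dual A f"
  then obtain X eta eps where dp: "dual_pair A X f eta eps" unfolding has_left_dual_def by blast
  obtain a b c d where e1: "eta = (a,b,c,d)" by (cases eta rule: prod_cases4)
  obtain e g1 g k where e2: "eps = (e,g1,g,k)" by (cases eps rule: prod_cases4)
  from dp[unfolded e1 e2 arr_dual_tuple] show "iso C f"
    using left_iso[of f X c g d k] by blast
next
  assume fi: "iso C f"
  obtain Dl eta eps where dp: "dual_pair C Dl (Dm f) eta eps"
    using rg ob_dom[OF f] unfolding has_left_dual_def by blast
  note d = dp_unfold[OF dp]
  have T: "dual_pair C Dl (Cd f) ((f \<otimes> ii Dl) \<cdot> eta) (eps \<cdot> (ii Dl \<otimes> iv f))"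
    using T2[OF dp fi refl refl] .
  have "dual_pair A (ii Dl) f (ii I0, f \<otimes> ii Dl, eta, (f \<otimes> ii Dl) \<cdot> eta) (ii Dl \<otimes> f, ii I0, eps, eps \<cdot> (ii Dl \<otimes> iv f))"
    unfolding arr_dual_tuple using d(1-8) f fi dp T by (simp add: mg)
  thus "has_left_dual A f" unfolding has_left_dual_def by blast
qed

end

theorem mainTheorem11:
  fixes C :: "('o, 'm) mcat" and f :: 'm
  assumes "rigid C" and "f \<in> cAr C"
  shows "(has_right_dual (arr_cat C) f \<longleftrightarrow> iso C f) \<and>
         (has_left_dual (arr_cat C) f \<longleftrightarrow> iso C f)"
proof -
  have mon: "is_monoidal C" and rg: "\<forall>X\<in>cOb C. has_left_dual C X \<and> has_right_dual C X"
    using assms(1) unfolding rigid_def by blast+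
  interpret moncat C by (rule moncat.intro) (rule mon)
  show ?thesis using right_main[OF rg assms(2)] left_main[OF rg assms(2)] by blast
qed

end
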